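(* Let $(S,\lambda_S^\bullet,\mu_S^{(0)})$, $(G,\lambda_G^\bullet,\mu_G^{(0)})$, $(T,\lambda_T^\bullet,\mu_T^{(0)})$ be Haar groupoids, $p:S\to G$, $q:T\to G$ homomorphisms of Haar groupoids with weak pullback $P$. Let $\gamma_p^\bullet$ be a locally finite Borel system of measures on $p|_{S^{(0)}}:S^{(0)}\to G^{(0)}$ which is a disintegration of $\mu_S^{(0)}$ with respect to $\mu_G^{(0)}$, and $\gamma_q^\bullet$ a locally finite Borel system of measures on $q|_{T^{(0)}}:T^{(0)}\to G^{(0)}$ which is a disintegration of $\mu_T^{(0)}$ with respect to $\mu_G^{(0)}$. Then the projection $\pi_G:P^{(0)}\to G$, $(s,g,t)\mapsto g$, admits a locally finite Borel system of measures $\eta^\bullet$ given by $\eta^x=\gamma_p^{r_G(x)}\times\delta_x\times\gamma_q^{d_G(x)}$ for $x\in G$.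
   Context: A system of measures on a Borel map $\pi:X\to Y$ is a family $\{\lambda^y\}_{y\in Y}$ of positive Borel measures on $X$ with each $\lambda^y$ concentrated on $\pi^{-1}(y)$; it is a Borel system of measures (BSM) if $y\mapsto\lambda^y(E)$ is Borel for each Borel $E\subseteq X$; it is locally finite if every $x\in X$ has a neighborhood $U$ with $\lambda^y(U)<\infty$ for all $y$. A BSM $\gamma^\bullet$ on $f:X\to Y$ is a disintegration of a measure $\mu$ on $X$ with respect to a measure $\nu$ on $Y$ if $\mu(E)=\int_Y\gamma^y(E)\,d\nu(y)$ for all Borel $E$. For a groupoid, $G^{(0)}$ is the unit space, $r,d$ range/source, $G^u=r^{-1}(u)$. A Haar groupoid $(G,\lambda^\bullet,\mu^{(0)})$ is a second countable, locally compact, Hausdorff topological groupoid with a continuous left Haar system $\lambda^\bullet$ (a system of measures on $r$ that is continuous in the sense that $u\mapsto\int f d\lambda^u$ is continuous for continuous compactly supported $f\ge0$, left invariant $\lambda^{d(x)}(E)=\lambda^{r(x)}(x(E\cap G^{d(x)}))$, and positive on open sets meeting $G^u$) and a non-zero Radon measure $\mu^{(0)}$ on $G^{(0)}$ quasi-invariant in the sense that the induced measure $\mu(E)=\int\lambda^u(E)d\mu^{(0)}(u)$ is equivalent to $E\mapsto\mu(E^{-1})$. A homomorphism of Haar groupoids is a continuous groupoid homomorphism preserving the measure class of induced measures. The weak pullback has unit space $P^{(0)}=\{(s,g,t)\in S^{(0)}\times G\times T^{(0)}: r_G(g)=p(s),\ d_G(g)=q(t)\}$ with the subspace topology; $\eta^x$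 is a measure on $S^{(0)}\times G\times T^{(0)}$ concentrated on $P^{(0)}$, regarded as a measure on $P^{(0)}$. *)

theory Defs
  imports "HOL-Probability.Probability"
begin

section \<open>Groupoids whose elements form the whole (topological) type\<close>

record 'a groupoid =
  units :: "'a set"
  rng   :: "'a \<Rightarrow> 'a"
  src   :: "'a \<Rightarrow> 'a"
  mult  :: "'a \<Rightarrow> 'a \<Rightarrow> 'a"  \<comment> \<open>composition, meaningful when src x = rng y\<close>
  ginv  :: "'a \<Rightarrow> 'a"

definition groupoid :: "'a groupoid \<Rightarrow> bool" where
  "groupoid G \<longleftrightarrow>
     (\<forall>x. rng G x \<in> units G \<and> src G x \<in> units G) \<and>
     (\<forall>u\<in>units G. rng G u = u \<and> src G u = u) \<and>
     (\<forall>x y. src G x = rng G y \<longrightarrow>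
        rng G (mult G x y) = rng G x \<and> src G (mult G x y) = src G y) \<and>
     (\<forall>x y z. src G x = rng G y \<and> src G y = rng G z \<longrightarrow>
        mult G (mult G x y) z = mult G x (mult G y z)) \<and>
     (\<forall>x. mult G x (src G x) = x \<and> mult G (rng G x) x = x) \<and>
     (\<forall>x. rng G (ginv G x) = src G x \<and> src G (ginv G x) = rng G x \<and>
        mult G x (ginv G x) = rng G x \<and> mult G (ginv G x) x = src G x)"

text \<open>Second countable, locally compact, Hausdorff topological groupoid
  (second countability and Hausdorffness come from the type classes).\<close>
definition topological_groupoid ::
  "('a::{second_countable_topology,t2_space}) groupoid \<Rightarrow> bool" where
  "topological_groupoid G \<longleftrightarrow> groupoid G \<and>
     locally_compact_space (euclidean :: 'a topology) \<and>
     continuous_on UNIV (rng G) \<and> continuous_on UNIV (src G) \<and>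
     continuous_on UNIV (ginv G) \<and>
     continuous_on {(x, y). src G x = rng G y} (\<lambda>(x, y). mult G x y)"

definition range_fibre :: "'a groupoid \<Rightarrow> 'a \<Rightarrow> 'a set" where
  "range_fibre G u = rng G -` {u}"

definition left_translate :: "'a groupoid \<Rightarrow> 'a \<Rightarrow> 'a set \<Rightarrow> 'a set" where
  "left_translate G x A = mult G x ` A"

definition continuous_left_Haar_system ::
  "('a::{second_countable_topology,t2_space}) groupoid \<Rightarrow> ('a \<Rightarrow> 'a measure) \<Rightarrow> bool" where
  "continuous_left_Haar_system G lam \<longleftrightarrow>
     \<comment> \<open>system of (positive Borel) measures on r\<close>
     (\<forall>u\<in>units G. sets (lam u) = sets borel \<and>
        emeasure (lam u) (UNIV - range_fibre G u) = 0) \<and>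
     \<comment> \<open>continuity\<close>
     (\<forall>f :: 'a \<Rightarrow> real. continuous_on UNIV f \<and> compact (closure {x. f x \<noteq> 0}) \<and>
        (\<forall>x. 0 \<le> f x) \<longrightarrow>
        continuous_on (units G) (\<lambda>u. \<integral>\<^sup>+ x. ennreal (f x) \<partial>lam u)) \<and>
     \<comment> \<open>left invariance\<close>
     (\<forall>x. \<forall>E\<in>sets borel.
        emeasure (lam (src G x)) E =
        emeasure (lam (rng G x)) (left_translate G x (E \<inter> range_fibre G (src G x)))) \<and>
     \<comment> \<open>positivity on open sets meeting G^u\<close>
     (\<forall>u\<in>units G. \<forall>U. open U \<and> U \<inter> range_fibre G u \<noteq> {} \<longrightarrow> emeasure (lam u) U > 0)"

definition radon_on :: "('a::topological_space) set \<Rightarrow> 'a measure \<Rightarrow> bool" where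
  "radon_on X m \<longleftrightarrow> sets m = sets borel \<and> emeasure m (UNIV - X) = 0 \<and>
     (\<forall>K. compact K \<longrightarrow> emeasure m K < \<infinity>)"

definition induced_measure ::
  "('a::topological_space \<Rightarrow> 'a measure) \<Rightarrow> 'a measure \<Rightarrow> 'a measure" where
  "induced_measure lam m0 = measure_of UNIV (sets borel)
     (\<lambda>E. \<integral>\<^sup>+ u. emeasure (lam u) E \<partial>m0)"

definition Haar_groupoid ::
  "('a::{second_countable_topology,t2_space}) groupoid \<Rightarrow> ('a \<Rightarrow> 'a measure) \<Rightarrow> 'a measure \<Rightarrow> bool" where
  "Haar_groupoid G lam m0 \<longleftrightarrow>
     topological_groupoid G \<and> continuous_left_Haar_system G lam \<and>
     radon_on (units G) m0 \<and> emeasure m0 UNIV \<noteq> 0 \<and>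
     \<comment> \<open>quasi-invariance: \<mu> equivalent to E \<mapsto> \<mu>(E^{-1})\<close>
     (\<forall>E\<in>sets borel. emeasure (induced_measure lam m0) E = 0 \<longleftrightarrow>
        emeasure (induced_measure lam m0) (ginv G ` E) = 0)"

definition Haar_groupoid_hom ::
  "('a::{second_countable_topology,t2_space}) groupoid \<Rightarrow> ('a \<Rightarrow> 'a measure) \<Rightarrow> 'a measure \<Rightarrow>
   ('b::{second_countable_topology,t2_space}) groupoid \<Rightarrow> ('b \<Rightarrow> 'b measure) \<Rightarrow> 'b measure \<Rightarrow>
   ('a \<Rightarrow> 'b) \<Rightarrow> bool" where
  "Haar_groupoid_hom G lamG mG H lamH mH \<phi> \<longleftrightarrow>
     Haar_groupoid G lamG mG \<and> Haar_groupoid H lamH mH \<and>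
     continuous_on UNIV \<phi> \<and>
     (\<forall>x y. src G x = rng G y \<longrightarrow>
        src H (\<phi> x) = rng H (\<phi> y) \<and> \<phi> (mult G x y) = mult H (\<phi> x) (\<phi> y)) \<and>
     (\<forall>E\<in>sets borel. emeasure (induced_measure lamH mH) E = 0 \<longleftrightarrow>
        emeasure (induced_measure lamG mG) (\<phi> -` E) = 0)"

text \<open>Measures on X \<subseteq> 'a are represented as Borel measures on 'a concentrated on X.\<close>
definition system_of_measures ::
  "('a::topological_space) set \<Rightarrow> ('b::topological_space) set \<Rightarrow> ('a \<Rightarrow> 'b) \<Rightarrow> ('b \<Rightarrow> 'a measure) \<Rightarrow> bool" where
  "system_of_measures X Y \<pi> lam \<longleftrightarrow>
     (\<forall>y\<in>Y. sets (lam y) = sets borel \<and> emeasure (lam y) (UNIV - (X \<inter> \<pi> -` {y})) = 0)"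

definition Borel_system_of_measures ::
  "('a::topological_space) set \<Rightarrow> ('b::topological_space) set \<Rightarrow> ('a \<Rightarrow> 'b) \<Rightarrow> ('b \<Rightarrow> 'a measure) \<Rightarrow> bool" where
  "Borel_system_of_measures X Y \<pi> lam \<longleftrightarrow> system_of_measures X Y \<pi> lam \<and>
     (\<forall>E\<in>sets borel. (\<lambda>y. emeasure (lam y) E) \<in> borel_measurable (restrict_space borel Y))"

definition locally_finite_som ::
  "('a::topological_space) set \<Rightarrow> ('b::topological_space) set \<Rightarrow> ('b \<Rightarrow> 'a measure) \<Rightarrow> bool" where
  "locally_finite_som X Y lam \<longleftrightarrow>
     (\<forall>x\<in>X. \<exists>U. open U \<and> x \<in> U \<and> (\<forall>y\<in>Y. emeasure (lam y) U < \<infinity>))"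

definition disintegration ::
  "('a::topological_space) set \<Rightarrow> ('b::topological_space) set \<Rightarrow> ('a \<Rightarrow> 'b) \<Rightarrow> ('b \<Rightarrow> 'a measure) \<Rightarrow>
   'a measure \<Rightarrow> 'b measure \<Rightarrow> bool" where
  "disintegration X Y f gam mu nu \<longleftrightarrow> Borel_system_of_measures X Y f gam \<and>
     (\<forall>E\<in>sets borel. emeasure mu E = (\<integral>\<^sup>+ y. emeasure (gam y) E \<partial>nu))"

definition weak_pullback_units ::
  "'s groupoid \<Rightarrow> 'g groupoid \<Rightarrow> 't groupoid \<Rightarrow> ('s \<Rightarrow> 'g) \<Rightarrow> ('t \<Rightarrow> 'g) \<Rightarrow> ('s \<times> 'g \<times> 't) set" where
  "weak_pullback_units S G T p q =
     {(s, g, t). s \<in> units S \<and> t \<in> units T \<and> rng G g = p s \<and> src G g = q t}"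

end

theory Submission imports Defs begin
lemma borel_prod3: "((borel::'a::second_countable_topology measure) \<Otimes>\<^sub>M ((borel :: 'b::second_countable_topology measure) \<Otimes>\<^sub>M (borel :: 'c::second_countable_topology measure))) = (borel :: ('a \<times> 'b \<times> 'c) measure)"
  by (subst borel_prod[where 'a='b and 'b='c]) (rule borel_prod)

lemma nn_integral_return_t1:
  "(\<integral>\<^sup>+ g. h g \<partial>return borel (x::'a::t1_space)) = h x"
proof -
  have "AE g in return borel x. g = x"
    by (subst AE_return) (auto)
  then have "(\<integral>\<^sup>+ g. h g \<partial>return borel x) = (\<integral>\<^sup>+ g. h x \<partial>return borel x)"
    by (intro nn_integral_cong_AE) auto
  also have "\<dots> = h x" by (simp add: emeasure_return)
  finally show ?thesis .
qed

lemma countable_open_cover: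
  fixes X :: "'a::second_countable_topology set"
  assumes "\<forall>x\<in>X. \<exists>U. open U \<and> x \<in> U \<and> P U" and "P {}"
  obtains U :: "nat \<Rightarrow> 'a set" where "\<And>i. open (U i)" "\<And>i. P (U i)" "X \<subseteq> (\<Union>i. U i)"
proof -
  let ?F = "{U. open U \<and> P U}"
  obtain F' where F': "F' \<subseteq> ?F" "countable F'" "\<Union>F' = \<Union>?F"
    using Lindelof[of ?F] by auto
  let ?G = "insert {} F'"
  have G: "countable ?G" "?G \<noteq> {}" using F' by auto
  have r: "range (from_nat_into ?G) = ?G" using range_from_nat_into[OF G(2,1)] .
  show ?thesis
  proof
    fix i show "open (from_nat_into ?G i)" "P (from_nat_into ?G i)"
      using r F'(1) assms(2) by (metis (mono_tags, lifting) UNIV_I image_eqI insert_iff mem_Collect_eq open_empty subsetD)+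
  next
    show "X \<subseteq> (\<Union>i. from_nat_into ?G i)"
    proof
      fix x assume "x \<in> X"
      then obtain U where "open U" "x \<in> U" "P U" using assms(1) by blast
      then have "x \<in> \<Union>F'" using F'(3) by blast
      then obtain V where V: "V \<in> F'" "x \<in> V" by blast
      then have "V \<in> range (from_nat_into ?G)" using r by auto
      then show "x \<in> (\<Union>i. from_nat_into ?G i)" using V(2) by auto
    qed
  qed
qed


lemma kernel_finite_measurable:
  assumes sets: "\<And>x. x \<in> space M \<Longrightarrow> sets (K x) = sets N"
    and fin: "\<And>x. x \<in> space M \<Longrightarrow> emeasure (K x) (space N) < \<infinity>"
    and meas: "\<And>A. A \<in> sets N \<Longrightarrow> (\<lambda>x. emeasure (K x) A) \<in> borel_measurable M"
    and f: "(\<lambda>(x,y). f x y) \<in> borel_measurable (M \<Otimes>\<^sub>M N)"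
  shows "(\<lambda>x. \<integral>\<^sup>+y. f x y \<partial>K x) \<in> borel_measurable M"
proof (cases "space N = {}")
  case True
  have z0: "\<And>x. x \<in> space M \<Longrightarrow> (\<integral>\<^sup>+y. f x y \<partial>K x) = 0"
    using sets True by (metis nn_integral_empty sets_eq_imp_space_eq)
  have "(\<lambda>x. \<integral>\<^sup>+y. f x y \<partial>K x) \<in> borel_measurable M \<longleftrightarrow> (\<lambda>x. 0::ennreal) \<in> borel_measurable M"
    by (rule measurable_cong) (simp add: z0)
  then show ?thesis by simp
next
  case False
  define c where "c x = emeasure (K x) (space N)" for x
  define L where "L x = scale_measure (inverse (c x)) (K x)" for x
  have sp: "x \<in> space M \<Longrightarrow> space (K x) = space N" for x using sets sets_eq_imp_space_eq by blast
  have Lk: "L \<in> measurable M (subprob_algebra N)"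
  proof (rule measurable_subprob_algebra)
    fix a assume a: "a \<in> space M"
    show "sets (L a) = sets N" using sets[OF a] by (simp add: L_def)
    have "emeasure (L a) (space (L a)) = inverse (c a) * c a"
      using sp[OF a] by (simp add: L_def c_def space_scale_measure)
    also have "\<dots> \<le> 1"
    proof (cases "c a = 0")
      case True then show ?thesis by simp
    next
      case False
      have "c a < \<infinity>" using fin[OF a] c_def by simp
      with False have "inverse (c a) * c a = 1"
        using ennreal_divide_self[of "c a"] by (simp add: divide_ennreal_def mult.commute)
      then show ?thesis by simp
    qed
    finally show "subprob_space (L a)"
      by (intro subprob_spaceI) (auto simp: L_def space_scale_measure sp[OF a] False)
  next
    fix A assume "A \<in> sets N"
    then show "(\<lambda>a. emeasure (L a) A) \<in> borel_measurable M"
      unfolding L_def c_def using meas by (simp add: measurable_compose[OF _ borel_measurable_inverse])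
  qed
  have eq: "(\<integral>\<^sup>+y. f x y \<partial>K x) = c x * (\<integral>\<^sup>+y. f x y \<partial>L x)" if x: "x \<in> space M" for x
  proof -
    have fx: "f x \<in> borel_measurable (K x)"
      using measurable_Pair2[OF f x] sets[OF x] by (simp cong: measurable_cong_sets)
    have "c x * (\<integral>\<^sup>+y. f x y \<partial>L x) = c x * inverse (c x) * (\<integral>\<^sup>+y. f x y \<partial>K x)"
      unfolding L_def by (simp add: nn_integral_scale_measure[OF fx] mult.assoc)
    also have "\<dots> = (\<integral>\<^sup>+y. f x y \<partial>K x)"
    proof (cases "c x = 0")
      case True
      then have "emeasure (K x) (space (K x)) = 0" using sp[OF x] c_def by simp
      then have "(\<integral>\<^sup>+y. f x y \<partial>K x) = 0"
      proof -
        have "AE y in K x. f x y = 0"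
          by (rule AE_I'[of "space (K x)"]) (auto simp: null_sets_def \<open>emeasure (K x) (space (K x)) = 0\<close>)
        then have "(\<integral>\<^sup>+y. f x y \<partial>K x) = (\<integral>\<^sup>+y. 0 \<partial>K x)" by (rule nn_integral_cong_AE)
        then show ?thesis by simp
      qed
      then show ?thesis by simp
    next
      case False
      have "c x < \<infinity>" using fin[OF x] c_def by simp
      with False have "c x * inverse (c x) = 1"
        using ennreal_divide_self[of "c x"] by (simp add: divide_ennreal_def)
      then show ?thesis by simp
    qed
    finally show ?thesis ..
  qed
  have mC: "(\<lambda>x. c x * (\<integral>\<^sup>+y. f x y \<partial>L x)) \<in> borel_measurable M"
  proof (intro borel_measurable_times_ennreal)
    show "c \<in> borel_measurable M" unfolding c_def using meas by simp
    show "(\<lambda>x. \<integral>\<^sup>+y. f x y \<partial>L x) \<in> borel_measurable M"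
      by (rule nn_integral_measurable_subprob_algebra2[OF f Lk])
  qed
  have "(\<lambda>x. \<integral>\<^sup>+y. f x y \<partial>K x) \<in> borel_measurable M \<longleftrightarrow> (\<lambda>x. c x * (\<integral>\<^sup>+y. f x y \<partial>L x)) \<in> borel_measurable M"
    by (rule measurable_cong) (rule eq)
  then show ?thesis using mC by simp
qed


lemma kernel_cover_measurable:
  fixes U :: "nat \<Rightarrow> 'b set"
  assumes sets: "\<And>x. x \<in> space M \<Longrightarrow> sets (K x) = sets N"
    and U: "\<And>i. U i \<in> sets N"
    and fin: "\<And>x i. x \<in> space M \<Longrightarrow> emeasure (K x) (U i) < \<infinity>"
    and null: "\<And>x. x \<in> space M \<Longrightarrow> emeasure (K x) (space N - (\<Union>i. U i)) = 0"
    and meas: "\<And>A. A \<in> sets N \<Longrightarrow> (\<lambda>x. emeasure (K x) A) \<in> borel_measurable M"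
    and f: "(\<lambda>(x,y). f x y) \<in> borel_measurable (M \<Otimes>\<^sub>M N)"
  shows "(\<lambda>x. \<integral>\<^sup>+y. f x y \<partial>K x) \<in> borel_measurable M"
proof -
  define W where "W n = (\<Union>i<n. U i)" for n
  have W: "W n \<in> sets N" for n unfolding W_def using U by auto
  have Winc: "incseq W" unfolding W_def incseq_def by (auto 4 3 intro: less_le_trans)
  have WU: "(\<Union>n. W n) = (\<Union>i. U i)" unfolding W_def by auto
  have sp: "x \<in> space M \<Longrightarrow> space (K x) = space N" for x using sets sets_eq_imp_space_eq by blast
  have Wfin: "emeasure (K x) (W n) < \<infinity>" if x: "x \<in> space M" for x n
  proof -
    have "emeasure (K x) (W n) \<le> (\<Sum>i<n. emeasure (K x) (U i))"
      unfolding W_def by (rule emeasure_subadditive_finite) (use U sets[OF x] in auto)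
    also have "\<dots> < \<infinity>" using fin[OF x] by simp
    finally show ?thesis .
  qed
  define Kn where "Kn n x = density (K x) (indicator (W n))" for n x
  have mn: "(\<lambda>x. \<integral>\<^sup>+y. f x y \<partial>Kn n x) \<in> borel_measurable M" for n
  proof (rule kernel_finite_measurable[OF _ _ _ f])
    fix x assume x: "x \<in> space M"
    show "sets (Kn n x) = sets N" using sets[OF x] by (simp add: Kn_def)
    have "emeasure (Kn n x) (space N) = emeasure (K x) (W n \<inter> space N)"
      unfolding Kn_def using W sets[OF x] by (intro emeasure_restricted) auto
    also have "\<dots> = emeasure (K x) (W n)" using W[of n] sets.sets_into_space by (metis Int_absorb2)
    finally show "emeasure (Kn n x) (space N) < \<infinity>" using Wfin[OF x] by simp
  next
    fix A assume A: "A \<in> sets N"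
    have mK: "(\<lambda>x. emeasure (K x) (W n \<inter> A)) \<in> borel_measurable M" using meas A W by auto
    have em: "x \<in> space M \<Longrightarrow> emeasure (Kn n x) A = emeasure (K x) (W n \<inter> A)" for x
      unfolding Kn_def using W A sets by (intro emeasure_restricted) auto
    have "(\<lambda>x. emeasure (Kn n x) A) \<in> borel_measurable M \<longleftrightarrow> (\<lambda>x. emeasure (K x) (W n \<inter> A)) \<in> borel_measurable M"
      by (rule measurable_cong) (rule em)
    then show "(\<lambda>x. emeasure (Kn n x) A) \<in> borel_measurable M" using mK by simp
  qed
  have eq: "(\<integral>\<^sup>+y. f x y \<partial>K x) = (SUP n. \<integral>\<^sup>+y. f x y \<partial>Kn n x)" if x: "x \<in> space M" for x
  proof -
    have fx: "f x \<in> borel_measurable (K x)"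
      using measurable_Pair2[OF f x] sets[OF x] by (simp cong: measurable_cong_sets)
    have Wm: "indicator (W n) \<in> borel_measurable (K x)" for n using W sets[OF x] by simp
    have "(\<integral>\<^sup>+y. f x y \<partial>Kn n x) = (\<integral>\<^sup>+y. indicator (W n) y * f x y \<partial>K x)" for n
      unfolding Kn_def by (rule nn_integral_density[OF Wm fx])
    then have "(SUP n. \<integral>\<^sup>+y. f x y \<partial>Kn n x) = (SUP n. \<integral>\<^sup>+y. indicator (W n) y * f x y \<partial>K x)" by simp
    also have "\<dots> = (\<integral>\<^sup>+y. (SUP n. indicator (W n) y * f x y) \<partial>K x)"
    proof (rule nn_integral_monotone_convergence_SUP[symmetric])
      show "incseq (\<lambda>n y. indicator (W n) y * f x y)"
        using Winc unfolding incseq_def le_fun_def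
        by (auto intro!: mult_right_mono simp: indicator_def subset_eq)
      show "(\<lambda>y. indicator (W n) y * f x y) \<in> borel_measurable (K x)" for n using Wm[of n] fx by (rule borel_measurable_times_ennreal)
    qed
    also have "\<dots> = (\<integral>\<^sup>+y. f x y \<partial>K x)"
    proof (rule nn_integral_cong_AE)
      have "AE y in K x. y \<in> (\<Union>i. U i)"
        by (rule AE_I'[of "space N - (\<Union>i. U i)"]) (use null[OF x] sets[OF x] U sp[OF x] in \<open>auto simp: null_sets_def\<close>)
      then show "AE y in K x. (SUP n. indicator (W n) y * f x y) = f x y"
      proof (rule AE_mp, intro AE_I2 impI)
        fix y assume "y \<in> (\<Union>i. U i)"
        then have "y \<in> (\<Union>n. W n)" using WU by simp
        then obtain m where m: "y \<in> W m" by blast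
        have "(SUP n. indicator (W n) y * f x y) \<le> f x y"
          by (rule SUP_least) (auto simp: indicator_def)
        moreover have "f x y \<le> (SUP n. indicator (W n) y * f x y)"
          using m by (intro SUP_upper2[of m]) auto
        ultimately show "(SUP n. indicator (W n) y * f x y) = f x y" by simp
      qed
    qed
    finally show ?thesis ..
  qed
  have mS: "(\<lambda>x. SUP n. \<integral>\<^sup>+y. f x y \<partial>Kn n x) \<in> borel_measurable M"
    using mn by (intro borel_measurable_SUP) auto
  have "(\<lambda>x. \<integral>\<^sup>+y. f x y \<partial>K x) \<in> borel_measurable M \<longleftrightarrow> (\<lambda>x. SUP n. \<integral>\<^sup>+y. f x y \<partial>Kn n x) \<in> borel_measurable M"
    by (rule measurable_cong) (rule eq)
  then show ?thesis using mS by simp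
qed


lemma units_closed:
  assumes "groupoid G" "continuous_on UNIV (rng G)"
  shows "closed (units (G::'a::t2_space groupoid))"
proof -
  have g1: "\<forall>x. rng G x \<in> units G \<and> src G x \<in> units G"
    using assms(1) unfolding groupoid_def by (rule conjunct1)
  have g2: "\<forall>u\<in>units G. rng G u = u \<and> src G u = u"
    using assms(1) unfolding groupoid_def by (elim conjE)
  have "units G = {x. rng G x = id x}"
  proof
    show "units G \<subseteq> {x. rng G x = id x}" using g2 by auto
    show "{x. rng G x = id x} \<subseteq> units G"
    proof
      fix x assume "x \<in> {x. rng G x = id x}"
      then have "rng G x = x" by simp
      then show "x \<in> units G" using g1 by metis
    qed
  qed
  moreover have "closed {x. rng G x = id x}"
    by (intro closed_Collect_eq assms(2) continuous_on_id')
  ultimately show ?thesis by simp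
qed

lemma som_kernel_measurable:
  fixes gam :: "'b::topological_space \<Rightarrow> 'a::{second_countable_topology,t2_space} measure"
    and h :: "'c \<Rightarrow> 'b"
  assumes bsm: "Borel_system_of_measures X Y \<pi> gam"
    and lf: "locally_finite_som X Y gam"
    and Xc: "closed X" and \<pi>c: "continuous_on UNIV \<pi>"
    and hm: "h \<in> M \<rightarrow>\<^sub>M borel" and hY: "\<And>z. z \<in> space M \<Longrightarrow> h z \<in> Y"
    and f: "(\<lambda>(z,a). f z a) \<in> borel_measurable (M \<Otimes>\<^sub>M borel)"
    and t1: "\<And>y::'b. closed {y}"
  shows "(\<lambda>z. \<integral>\<^sup>+a. f z a \<partial>gam (h z)) \<in> borel_measurable M"
proof -
  have sys: "\<And>y. y \<in> Y \<Longrightarrow> sets (gam y) = sets borel \<and> emeasure (gam y) (UNIV - (X \<inter> \<pi> -` {y})) = 0"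
    using bsm unfolding Borel_system_of_measures_def system_of_measures_def by blast
  have bm: "\<And>E. E \<in> sets borel \<Longrightarrow> (\<lambda>y. emeasure (gam y) E) \<in> borel_measurable (restrict_space borel Y)"
    using bsm unfolding Borel_system_of_measures_def by blast
  obtain U :: "nat \<Rightarrow> 'a set" where U: "\<And>i. open (U i)" "\<And>i. \<forall>y\<in>Y. emeasure (gam y) (U i) < \<infinity>"
      "X \<subseteq> (\<Union>i. U i)"
    using countable_open_cover[of X "\<lambda>U. \<forall>y\<in>Y. emeasure (gam y) U < \<infinity>"] lf
    unfolding locally_finite_som_def by auto
  show ?thesis
  proof (rule kernel_cover_measurable[of M "\<lambda>z. gam (h z)" borel U, OF _ _ _ _ _ f])
    fix z assume z: "z \<in> space M"
    show "sets (gam (h z)) = sets borel" using sys hY[OF z] by blast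
    show "emeasure (gam (h z)) (U i) < \<infinity>" for i using U(2) hY[OF z] by blast
    have cl: "closed (X \<inter> \<pi> -` {h z})"
      using Xc closed_vimage[OF t1 \<pi>c] by blast
    have "emeasure (gam (h z)) (space borel - (\<Union>i. U i)) \<le> emeasure (gam (h z)) (UNIV - (X \<inter> \<pi> -` {h z}))"
      by (rule emeasure_mono) (use U(3) cl sys[OF hY[OF z]] in auto)
    then show "emeasure (gam (h z)) (space borel - (\<Union>i. U i)) = 0"
      using sys[OF hY[OF z]] by simp
  next
    show "U i \<in> sets borel" for i using U(1) by simp
    fix A :: "'a set" assume A: "A \<in> sets borel"
    have "h \<in> M \<rightarrow>\<^sub>M restrict_space borel Y"
      using hm hY by (intro measurable_restrict_space2) auto
    then show "(\<lambda>z. emeasure (gam (h z)) A) \<in> borel_measurable M"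
      using measurable_compose[OF _ bm[OF A]] by blast
  qed
qed


lemma som_sigma_finite:
  fixes gam :: "'b::topological_space \<Rightarrow> 'a::{second_countable_topology,t2_space} measure"
  assumes bsm: "Borel_system_of_measures X Y \<pi> gam"
    and lf: "locally_finite_som X Y gam"
    and Xc: "closed X" and \<pi>c: "continuous_on UNIV \<pi>"
    and t1: "\<And>y::'b. closed {y}" and y: "y \<in> Y"
  shows "sigma_finite_measure (gam y)"
proof -
  have sys: "sets (gam y) = sets borel" "emeasure (gam y) (UNIV - (X \<inter> \<pi> -` {y})) = 0"
    using bsm y unfolding Borel_system_of_measures_def system_of_measures_def by blast+
  obtain U :: "nat \<Rightarrow> 'a set" where U: "\<And>i. open (U i)" "\<And>i. \<forall>y\<in>Y. emeasure (gam y) (U i) < \<infinity>"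
      "X \<subseteq> (\<Union>i. U i)"
    using countable_open_cover[of X "\<lambda>U. \<forall>y\<in>Y. emeasure (gam y) U < \<infinity>"] lf
    unfolding locally_finite_som_def by auto
  have cl: "closed (X \<inter> \<pi> -` {y})"
    using Xc closed_vimage[OF t1 \<pi>c] by blast
  have "emeasure (gam y) (UNIV - (\<Union>i. U i)) \<le> emeasure (gam y) (UNIV - (X \<inter> \<pi> -` {y}))"
    by (rule emeasure_mono) (use U(3) cl sys in auto)
  then have z: "emeasure (gam y) (UNIV - (\<Union>i. U i)) = 0" using sys by simp
  show ?thesis
  proof (rule sigma_finite_measure.intro, intro exI[of _ "insert (UNIV - (\<Union>i. U i)) (range U)"] conjI)
    show "countable (insert (UNIV - \<Union> (range U)) (range U))" by simp
    show "insert (UNIV - \<Union> (range U)) (range U) \<subseteq> sets (gam y)"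
    proof -
      have "open (\<Union>i. U i)" using U(1) by auto
      then have "UNIV - (\<Union>i. U i) \<in> sets borel" by (intro borel_closed) (simp add: closed_def)
      moreover have "U i \<in> sets borel" for i using U(1) by simp
      ultimately show ?thesis using sys by auto
    qed
    show "\<Union> (insert (UNIV - \<Union> (range U)) (range U)) = space (gam y)"
    proof -
      have "space (gam y) = UNIV" using sets_eq_imp_space_eq[OF sys(1)] by simp
      then show ?thesis by (simp add: Un_Diff_cancel2)
    qed
    show "\<forall>a\<in>insert (UNIV - \<Union> (range U)) (range U). emeasure (gam y) a \<noteq> \<infinity>"
    proof
      fix a assume "a \<in> insert (UNIV - \<Union> (range U)) (range U)"
      then show "emeasure (gam y) a \<noteq> \<infinity>"
      proof
        assume "a = UNIV - \<Union> (range U)" then show ?thesis using z by simp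
      next
        assume "a \<in> range U"
        then obtain i where "a = U i" by blast
        moreover have "emeasure (gam y) (U i) < \<infinity>" using U(2) y by blast
        ultimately show ?thesis by simp
      qed
    qed
  qed
qed


theorem proposition5p3:
  fixes S :: "('s::{second_countable_topology,t2_space}) groupoid"
    and G :: "('g::{second_countable_topology,t2_space}) groupoid"
    and T :: "('t::{second_countable_topology,t2_space}) groupoid"
    and lamS :: "'s \<Rightarrow> 's measure" and muS :: "'s measure"
    and lamG :: "'g \<Rightarrow> 'g measure" and muG :: "'g measure"
    and lamT :: "'t \<Rightarrow> 't measure" and muT :: "'t measure"
    and p :: "'s \<Rightarrow> 'g" and q :: "'t \<Rightarrow> 'g"
    and gp :: "'g \<Rightarrow> 's measure" and gq :: "'g \<Rightarrow> 't measure"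
  assumes "Haar_groupoid S lamS muS"
    and "Haar_groupoid G lamG muG"
    and "Haar_groupoid T lamT muT"
    and "Haar_groupoid_hom S lamS muS G lamG muG p"
    and "Haar_groupoid_hom T lamT muT G lamG muG q"
    and "disintegration (units S) (units G) p gp muS muG"
    and "locally_finite_som (units S) (units G) gp"
    and "disintegration (units T) (units G) q gq muT muG"
    and "locally_finite_som (units T) (units G) gq"
  shows "Borel_system_of_measures (weak_pullback_units S G T p q) UNIV (\<lambda>(s, g, t). g)
           (\<lambda>x. gp (rng G x) \<Otimes>\<^sub>M (return borel x \<Otimes>\<^sub>M gq (src G x)))
       \<and> locally_finite_som (weak_pullback_units S G T p q) UNIV
           (\<lambda>x. gp (rng G x) \<Otimes>\<^sub>M (return borel x \<Otimes>\<^sub>M gq (src G x)))"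
proof -
  have HS: "topological_groupoid S" using assms(1) unfolding Haar_groupoid_def by (rule conjunct1)
  have HT: "topological_groupoid T" using assms(3) unfolding Haar_groupoid_def by (rule conjunct1)
  have HG: "topological_groupoid G" using assms(2) unfolding Haar_groupoid_def by (rule conjunct1)
  have grpS: "groupoid S" and rS: "continuous_on UNIV (rng S)"
    using HS unfolding topological_groupoid_def by simp_all
  have grpT: "groupoid T" and rT: "continuous_on UNIV (rng T)"
    using HT unfolding topological_groupoid_def by simp_all
  have grpG: "groupoid G" and rG: "continuous_on UNIV (rng G)" and dG: "continuous_on UNIV (src G)"
    using HG unfolding topological_groupoid_def by simp_all
  have pc: "continuous_on UNIV p"
    using assms(4) unfolding Haar_groupoid_hom_def by (elim conjE)
  have qc: "continuous_on UNIV q"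
    using assms(5) unfolding Haar_groupoid_hom_def by (elim conjE)
  have Sc: "closed (units S)" by (rule units_closed[OF grpS rS])
  have Tc: "closed (units T)" by (rule units_closed[OF grpT rT])
  have bp: "Borel_system_of_measures (units S) (units G) p gp"
    using assms(6) unfolding disintegration_def by (rule conjunct1)
  have bq: "Borel_system_of_measures (units T) (units G) q gq"
    using assms(8) unfolding disintegration_def by (rule conjunct1)
  have ru0: "\<forall>x. rng G x \<in> units G \<and> src G x \<in> units G"
    using grpG unfolding groupoid_def by (rule conjunct1)
  have ru: "rng G x \<in> units G" "src G x \<in> units G" for x
    using ru0 by simp_all
  have sysp: "\<And>y. y \<in> units G \<Longrightarrow> sets (gp y) = sets borel \<and> emeasure (gp y) (UNIV - (units S \<inter> p -` {y})) = 0"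
    using bp unfolding Borel_system_of_measures_def system_of_measures_def by blast
  have sysq: "\<And>y. y \<in> units G \<Longrightarrow> sets (gq y) = sets borel \<and> emeasure (gq y) (UNIV - (units T \<inter> q -` {y})) = 0"
    using bq unfolding Borel_system_of_measures_def system_of_measures_def by blast
  have sfq: "sigma_finite_measure (gq y)" if "y \<in> units G" for y
    by (rule som_sigma_finite[OF bq assms(9) Tc qc _ that]) simp
  define \<eta> where "\<eta> x = gp (rng G x) \<Otimes>\<^sub>M (return borel x \<Otimes>\<^sub>M gq (src G x))" for x
  have sets\<eta>: "sets (\<eta> x) = sets (borel :: ('s \<times> 'g \<times> 't) measure)" for x
  proof -
    have "sets (\<eta> x) = sets ((borel :: 's measure) \<Otimes>\<^sub>M ((borel :: 'g measure) \<Otimes>\<^sub>M (borel :: 't measure)))"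
      unfolding \<eta>_def using sysp[OF ru(1)] sysq[OF ru(2)]
      by (intro sets_pair_measure_cong) auto
    then show ?thesis unfolding borel_prod3 .
  qed
  have key: "emeasure (\<eta> x) E = (\<integral>\<^sup>+s. \<integral>\<^sup>+t. indicator E (s, x, t) \<partial>gq (src G x) \<partial>gp (rng G x))"
    if E: "E \<in> sets (borel :: ('s \<times> 'g \<times> 't) measure)" for x E
  proof -
    interpret Q: sigma_finite_measure "gq (src G x)" by (rule sfq[OF ru(2)])
    have sfr: "sigma_finite_measure (return borel x \<Otimes>\<^sub>M gq (src G x))"
      by (intro sigma_finite_pair_measure prob_space_imp_sigma_finite prob_space_return sfq ru) simp
    interpret R: sigma_finite_measure "return borel x \<Otimes>\<^sub>M gq (src G x)" by (rule sfr)
    have E': "E \<in> sets (gp (rng G x) \<Otimes>\<^sub>M (return borel x \<Otimes>\<^sub>M gq (src G x)))"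
      using sets\<eta> E unfolding \<eta>_def by simp
    have "emeasure (\<eta> x) E = (\<integral>\<^sup>+s. \<integral>\<^sup>+w. indicator E (s, w) \<partial>(return borel x \<Otimes>\<^sub>M gq (src G x)) \<partial>gp (rng G x))"
      unfolding \<eta>_def by (rule R.emeasure_pair_measure[OF E'])
    also have "\<dots> = (\<integral>\<^sup>+s. \<integral>\<^sup>+t. indicator E (s, x, t) \<partial>gq (src G x) \<partial>gp (rng G x))"
    proof (rule nn_integral_cong)
      fix s
      have Es: "Pair s -` E \<in> sets (return borel x \<Otimes>\<^sub>M gq (src G x))"
        using sets_Pair1[OF E'] by simp
      have "(\<integral>\<^sup>+w. indicator E (s, w) \<partial>(return borel x \<Otimes>\<^sub>M gq (src G x)))
          = (\<integral>\<^sup>+w. indicator (Pair s -` E) w \<partial>(return borel x \<Otimes>\<^sub>M gq (src G x)))"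
        by (intro nn_integral_cong) (simp add: indicator_def)
      also have "\<dots> = emeasure (return borel x \<Otimes>\<^sub>M gq (src G x)) (Pair s -` E)"
        by (rule nn_integral_indicator[OF Es])
      also have "\<dots> = (\<integral>\<^sup>+g. \<integral>\<^sup>+t. indicator (Pair s -` E) (g, t) \<partial>gq (src G x) \<partial>return borel x)"
        by (rule Q.emeasure_pair_measure[OF Es])
      also have "\<dots> = (\<integral>\<^sup>+t. indicator (Pair s -` E) (x, t) \<partial>gq (src G x))"
        by (rule nn_integral_return_t1)
      also have "\<dots> = (\<integral>\<^sup>+t. indicator E (s, x, t) \<partial>gq (src G x))"
        by (intro nn_integral_cong) (simp add: indicator_def)
      finally show "(\<integral>\<^sup>+w. indicator E (s, w) \<partial>(return borel x \<Otimes>\<^sub>M gq (src G x)))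
          = (\<integral>\<^sup>+t. indicator E (s, x, t) \<partial>gq (src G x))" .
    qed
    finally show ?thesis .
  qed
  have meas: "(\<lambda>x. emeasure (\<eta> x) E) \<in> borel_measurable borel"
    if E: "E \<in> sets (borel :: ('s \<times> 'g \<times> 't) measure)" for E
  proof -
    have E3[measurable]: "E \<in> sets ((borel :: 's measure) \<Otimes>\<^sub>M ((borel :: 'g measure) \<Otimes>\<^sub>M (borel :: 't measure)))"
      using E unfolding borel_prod3 .
    have dm: "(\<lambda>w. src G (fst w)) \<in> ((borel :: 'g measure) \<Otimes>\<^sub>M (borel :: 's measure)) \<rightarrow>\<^sub>M borel"
      using borel_measurable_continuous_onI[OF dG] by measurable
    have fm: "(\<lambda>(w, t). indicator E (snd w, fst w, t) :: ennreal)
        \<in> borel_measurable (((borel :: 'g measure) \<Otimes>\<^sub>M (borel :: 's measure)) \<Otimes>\<^sub>M (borel :: 't measure))"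
      by measurable
    have inner: "(\<lambda>w. \<integral>\<^sup>+t. indicator E (snd w, fst w, t) \<partial>gq (src G (fst w)))
        \<in> borel_measurable ((borel :: 'g measure) \<Otimes>\<^sub>M (borel :: 's measure))"
      by (rule som_kernel_measurable[OF bq assms(9) Tc qc dm ru(2) fm]) simp
    have inner': "(\<lambda>(z, s). \<integral>\<^sup>+t. indicator E (s, z, t) \<partial>gq (src G z))
        \<in> borel_measurable ((borel :: 'g measure) \<Otimes>\<^sub>M (borel :: 's measure))"
      using inner by (simp add: case_prod_beta')
    have rm: "rng G \<in> (borel :: 'g measure) \<rightarrow>\<^sub>M borel"
      using borel_measurable_continuous_onI[OF rG] .
    have "(\<lambda>x. \<integral>\<^sup>+s. \<integral>\<^sup>+t. indicator E (s, x, t) \<partial>gq (src G x) \<partial>gp (rng G x)) \<in> borel_measurable borel"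
      by (rule som_kernel_measurable[OF bp assms(7) Sc pc rm ru(1) inner']) simp
    then show ?thesis using key[OF E] by simp
  qed
  have conc: "emeasure (\<eta> x) (UNIV - (weak_pullback_units S G T p q \<inter> (\<lambda>(s, g, t). g) -` {x})) = 0" for x
  proof -
    define C where "C = units S \<inter> p -` {rng G x}"
    define D where "D = units T \<inter> q -` {src G x}"
    have Cc: "closed C" unfolding C_def using Sc closed_vimage[OF _ pc] by blast
    have Dc: "closed D" unfolding D_def using Tc closed_vimage[OF _ qc] by blast
    have eqP: "weak_pullback_units S G T p q \<inter> (\<lambda>(s, g, t). g) -` {x} = C \<times> ({x} \<times> D)"
      unfolding C_def D_def weak_pullback_units_def by auto
    have Xb: "UNIV - C \<times> ({x} \<times> D) \<in> sets (borel :: ('s \<times> 'g \<times> 't) measure)"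
      by (intro borel_open) (use Cc Dc in \<open>auto simp: open_Diff closed_Times\<close>)
    have AEC: "AE s in gp (rng G x). s \<in> C"
    proof (rule AE_I'[of "UNIV - C"])
      show "UNIV - C \<in> null_sets (gp (rng G x))"
        using sysp[OF ru(1)] Cc unfolding C_def by (auto simp: null_sets_def open_Diff)
    qed auto
    have AED: "AE t in gq (src G x). t \<in> D"
    proof (rule AE_I'[of "UNIV - D"])
      show "UNIV - D \<in> null_sets (gq (src G x))"
        using sysq[OF ru(2)] Dc unfolding D_def by (auto simp: null_sets_def open_Diff)
    qed auto
    have "emeasure (\<eta> x) (UNIV - C \<times> ({x} \<times> D))
        = (\<integral>\<^sup>+s. \<integral>\<^sup>+t. indicator (UNIV - C \<times> ({x} \<times> D)) (s, x, t) \<partial>gq (src G x) \<partial>gp (rng G x))"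
      by (rule key[OF Xb])
    also have "\<dots> = (\<integral>\<^sup>+s. 0 \<partial>gp (rng G x))"
    proof (rule nn_integral_cong_AE)
      show "AE s in gp (rng G x). (\<integral>\<^sup>+t. indicator (UNIV - C \<times> ({x} \<times> D)) (s, x, t) \<partial>gq (src G x)) = 0"
        using AEC
      proof (rule AE_mp, intro AE_I2 impI)
        fix s assume s: "s \<in> C"
        have "(\<integral>\<^sup>+t. indicator (UNIV - C \<times> ({x} \<times> D)) (s, x, t) \<partial>gq (src G x)) = (\<integral>\<^sup>+t. 0 \<partial>gq (src G x))"
          using AED by (rule nn_integral_cong_AE[OF AE_mp]) (auto simp: s indicator_def)
        then show "(\<integral>\<^sup>+t. indicator (UNIV - C \<times> ({x} \<times> D)) (s, x, t) \<partial>gq (src G x)) = 0" by simp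
      qed
    qed
    finally show ?thesis using eqP by simp
  qed
  have lfin: "locally_finite_som (weak_pullback_units S G T p q) UNIV \<eta>"
    unfolding locally_finite_som_def
  proof
    fix z assume "z \<in> weak_pullback_units S G T p q"
    then obtain s g t where z: "z = (s, g, t)" "s \<in> units S" "t \<in> units T"
      unfolding weak_pullback_units_def by auto
    obtain A where A: "open A" "s \<in> A" "\<forall>y\<in>units G. emeasure (gp y) A < \<infinity>"
      using assms(7) z(2) unfolding locally_finite_som_def by blast
    obtain B where B: "open B" "t \<in> B" "\<forall>y\<in>units G. emeasure (gq y) B < \<infinity>"
      using assms(9) z(3) unfolding locally_finite_som_def by blast
    show "\<exists>U. open U \<and> z \<in> U \<and> (\<forall>y\<in>UNIV. emeasure (\<eta> y) U < \<infinity>)"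
    proof (intro exI[of _ "A \<times> (UNIV \<times> B)"] conjI ballI)
      show "open (A \<times> (UNIV \<times> B))" using A(1) B(1) by (intro open_Times) auto
      show "z \<in> A \<times> (UNIV \<times> B)" using z A B by auto
      fix x :: 'g
      have Ab: "A \<in> sets (gp (rng G x))" using sysp[OF ru(1)] A(1) by simp
      have Bb: "B \<in> sets (gq (src G x))" using sysq[OF ru(2)] B(1) by simp
      have "emeasure (\<eta> x) (A \<times> (UNIV \<times> B))
          = (\<integral>\<^sup>+s. \<integral>\<^sup>+t. indicator (A \<times> (UNIV \<times> B)) (s, x, t) \<partial>gq (src G x) \<partial>gp (rng G x))"
        by (rule key) (use A(1) B(1) in \<open>auto intro!: borel_open open_Times\<close>)
      also have "\<dots> = (\<integral>\<^sup>+s. emeasure (gq (src G x)) B * indicator A s \<partial>gp (rng G x))"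
      proof (rule nn_integral_cong)
        fix s'
        have "(\<integral>\<^sup>+t. indicator (A \<times> (UNIV \<times> B)) (s', x, t) \<partial>gq (src G x))
            = (\<integral>\<^sup>+t. indicator A s' * indicator B t \<partial>gq (src G x))"
          by (intro nn_integral_cong) (simp add: indicator_def)
        also have "\<dots> = indicator A s' * emeasure (gq (src G x)) B"
          by (rule nn_integral_cmult_indicator[OF Bb])
        finally show "(\<integral>\<^sup>+t. indicator (A \<times> (UNIV \<times> B)) (s', x, t) \<partial>gq (src G x))
            = emeasure (gq (src G x)) B * indicator A s'" by (simp add: mult.commute)
      qed
      also have "\<dots> = emeasure (gq (src G x)) B * emeasure (gp (rng G x)) A"
        by (rule nn_integral_cmult_indicator[OF Ab])
      also have "\<dots> < \<infinity>"
        using A(3) B(3) ru by (simp add: ennreal_mult_less_top)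
      finally show "emeasure (\<eta> x) (A \<times> (UNIV \<times> B)) < \<infinity>" .
    qed
  qed
  have "Borel_system_of_measures (weak_pullback_units S G T p q) UNIV (\<lambda>(s, g, t). g) \<eta>"
    unfolding Borel_system_of_measures_def system_of_measures_def
    using sets\<eta> conc meas by (auto intro: measurable_restrict_space1)
  then show ?thesis using lfin unfolding \<eta>_def by simp
qed

end
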